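(* Let $d\ge2$ and $c\ge1$, and let $\mathcal{O}$ be a $c$-fat collection of convex objects in $\mathbb{R}^d$ which is closed under rotations and translations. Then $\mathcal{O}$ is $cd\sqrt d$-globally fat.
   Context: An object in $\mathbb{R}^d$ is a path-connected compact set; its size is the side length of its smallest enclosing axis-aligned hypercube. A collection is $c$-fat if for every $r\in\mathbb{R}$ and every closed axis-aligned box $R$ of side length $r$ there are at most $c$ pairwise non-intersecting objects of the collection of size at least $r$ intersecting $R$. An object $O$ is $k$-globally fat if there are $d$-dimensional balls $B_{in}\subseteq O\subseteq B_{out}$ with radii $R_{in},R_{out}$ satisfying $R_{out}\le kR_{in}$; a collection is $k$-globally fat if every member is. *)

theory Defs
  imports "HOL-Analysis.Analysis"
begin

text \<open>Objects live in \<open>real ^ 'n\<close>, i.e. R^d with d = CARD('n).\<close>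

definition cube :: "real ^ 'n \<Rightarrow> real \<Rightarrow> (real ^ 'n) set" where
  "cube a r = cbox a (a + r *\<^sub>R One)"

definition is_object :: "(real ^ 'n) set \<Rightarrow> bool" where
  "is_object X \<longleftrightarrow> X \<noteq> {} \<and> compact X \<and> path_connected X"

definition obj_size :: "(real ^ 'n) set \<Rightarrow> real" where
  "obj_size X = Inf {s. 0 \<le> s \<and> (\<exists>a. X \<subseteq> cube a s)}"

definition c_fat :: "real \<Rightarrow> (real ^ 'n) set set \<Rightarrow> bool" where
  "c_fat c \<X> \<longleftrightarrow>
     (\<forall>r::real. \<forall>a::real ^ 'n. \<forall>S. S \<subseteq> \<X> \<and> pairwise disjnt S \<and>
        (\<forall>X\<in>S. obj_size X \<ge> r \<and> X \<inter> cube a r \<noteq> {})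
        \<longrightarrow> finite S \<and> real (card S) \<le> c)"

definition globally_fat_obj :: "real \<Rightarrow> (real ^ 'n) set \<Rightarrow> bool" where
  "globally_fat_obj k X \<longleftrightarrow>
     (\<exists>x_in R_in x_out R_out. 0 \<le> R_in \<and> cball x_in R_in \<subseteq> X \<and> X \<subseteq> cball x_out R_out
        \<and> R_out \<le> k * R_in)"

definition globally_fat :: "real \<Rightarrow> (real ^ 'n) set set \<Rightarrow> bool" where
  "globally_fat k \<X> \<longleftrightarrow> (\<forall>X\<in>\<X>. globally_fat_obj k X)"

definition rotation :: "(real ^ 'n \<Rightarrow> real ^ 'n) \<Rightarrow> bool" where
  "rotation f \<longleftrightarrow> orthogonal_transformation f \<and> det (matrix f) = 1"

end

theory Submission
  imports Defs
begin

lemma One_nth [simp]: "(One::real^'n) $ i = 1"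
  by (metis one_index Cart_1)

lemma Basis_sum_nth [simp]: "(\<Sum>x\<in>Basis. (x::real^'n) $ i) = 1"
  using One_nth[of i] by simp

lemma mem_cube: "x \<in> cube a r \<longleftrightarrow> (\<forall>i. a$i \<le> x$i \<and> x$i \<le> a$i + r)"
  unfolding cube_def mem_box_cart by simp

lemma obj_size_ge:
  fixes Y :: "(real ^ 'n) set"
  assumes "bounded Y" "x \<in> Y" "y \<in> Y"
  shows "x$i - y$i \<le> obj_size Y"
proof -
  obtain B where B: "\<forall>z\<in>Y. norm z \<le> B" using assms(1) bounded_iff by blast
  have "Y \<subseteq> cube (- B *\<^sub>R One) (2*B)"
  proof
    fix z assume "z \<in> Y"
    then have zj: "\<bar>z$j\<bar> \<le> B" for j using B component_le_norm_cart order_trans by blast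
    show "z \<in> cube (- B *\<^sub>R One) (2*B)"
      unfolding mem_cube
    proof
      fix j show "(- B *\<^sub>R One) $ j \<le> z $ j \<and> z $ j \<le> (- B *\<^sub>R One) $ j + 2 * B"
        using zj[of j] by (simp add: abs_le_iff)
    qed
  qed
  moreover have "0 \<le> 2*B"
  proof -
    have "norm x \<le> B" using B assms(2) by blast
    moreover have "0 \<le> norm x" by simp
    ultimately show ?thesis by linarith
  qed
  ultimately have ne: "{s. 0 \<le> s \<and> (\<exists>a. Y \<subseteq> cube a s)} \<noteq> {}" by blast
  show ?thesis unfolding obj_size_def
  proof (rule cInf_greatest[OF ne])
    fix t assume "t \<in> {s. 0 \<le> s \<and> (\<exists>a. Y \<subseteq> cube a s)}"
    then obtain a where "Y \<subseteq> cube a t" by blast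
    then have "x \<in> cube a t" "y \<in> cube a t"
      using assms by auto
    then have "x$i \<le> a$i + t" "a$i \<le> y$i" unfolding mem_cube by auto
    then show "x$i - y$i \<le> t" by linarith
  qed
qed


lemma seg_in:
  fixes X :: "(real ^ 'n) set"
  assumes "convex X" "p \<in> X" "p + l *\<^sub>R e \<in> X" "0 \<le> \<tau>" "\<tau> \<le> l"
  shows "p + \<tau> *\<^sub>R e \<in> X"
proof (cases "l = 0")
  case True then show ?thesis using assms by simp
next
  case False
  then have l0: "l > 0" using assms by linarith
  have "(1 - \<tau>/l) *\<^sub>R p + (\<tau>/l) *\<^sub>R (p + l *\<^sub>R e) \<in> X"
    using convexD[OF assms(1) assms(2) assms(3)] assms l0 by simp
  moreover have "(1 - \<tau>/l) *\<^sub>R p + (\<tau>/l) *\<^sub>R (p + l *\<^sub>R e) = p + \<tau> *\<^sub>R e"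
    using l0 by (simp add: algebra_simps)
  ultimately show ?thesis by simp
qed

lemma chord:
  fixes X :: "(real ^ 'n) set" and \<X> :: "(real ^ 'n) set set"
  assumes X: "X \<in> \<X>" "compact X" "convex X" "p \<in> X"
    and fat: "c_fat c \<X>" and tr: "\<forall>X\<in>\<X>. \<forall>v. (\<lambda>x. v + x) ` X \<in> \<X>"
    and c: "c > 0" and s: "s \<ge> 0"
    and sz: "\<forall>v. s \<le> obj_size ((\<lambda>x. v + x) ` X)"
  shows "\<exists>x\<in>X. x + (s/c) *\<^sub>R axis i 1 \<in> X"
proof (cases "s = 0")
  case True then show ?thesis using X(4) by auto
next
  case False
  then have s0: "s > 0" using s by auto
  define l where "l = s/c"
  have l0: "l > 0" using s0 c by (simp add: l_def)
  define e :: "real^'n" where "e = axis i 1"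
  define D where "D = {x - y | x y. x \<in> X \<and> y \<in> X}"
  have cD: "compact D" unfolding D_def by (rule compact_differences[OF X(2) X(2)])
  have "D = (\<Union>x\<in>X. \<Union>y\<in>X. {x - y})" unfolding D_def by auto
  then have vD: "convex D" using convex_differences[OF X(3) X(3)] by simp
  have D0: "0 \<in> D" using X(4) unfolding D_def by force
  show ?thesis
  proof (rule ccontr)
    assume nc: "\<not> ?thesis"
    have "l *\<^sub>R e \<notin> D"
    proof
      assume "l *\<^sub>R e \<in> D"
      then obtain x y where xy: "x\<in>X" "y\<in>X" "l *\<^sub>R e = x - y" unfolding D_def by auto
      then have "y + (s/c) *\<^sub>R axis i 1 = x" by (simp add: l_def e_def algebra_simps)
      then show False using nc xy by auto
    qed
    then have "l *\<^sub>R e \<in> - D" by simp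
    moreover have "open (- D)" using cD compact_imp_closed by blast
    ultimately obtain \<epsilon> where \<epsilon>: "\<epsilon> > 0" "ball (l *\<^sub>R e) \<epsilon> \<subseteq> - D"
      using open_contains_ball by blast
    define \<delta> where "\<delta> = max (l/2) (l - \<epsilon>/2)"
    have \<delta>: "0 < \<delta>" "\<delta> < l" using l0 \<epsilon> by (auto simp: \<delta>_def)
    have "dist (l *\<^sub>R e) (\<delta> *\<^sub>R e) = l - \<delta>"
    proof -
      have "l *\<^sub>R e - \<delta> *\<^sub>R e = (l - \<delta>) *\<^sub>R e" by (simp add: algebra_simps)
      then show ?thesis using \<delta> by (simp add: dist_norm e_def)
    qed
    then have "\<delta> *\<^sub>R e \<in> ball (l *\<^sub>R e) \<epsilon>" using \<epsilon> by (auto simp: \<delta>_def)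
    then have \<delta>D: "\<delta> *\<^sub>R e \<notin> D" using \<epsilon>(2) by blast
    have farD: "t *\<^sub>R e \<notin> D" if "t \<ge> \<delta>" for t
    proof
      assume tD: "t *\<^sub>R e \<in> D"
      have t0: "t > 0" using that \<delta> by linarith
      have mem: "(\<delta>/t) *\<^sub>R (t *\<^sub>R e) + (1 - \<delta>/t) *\<^sub>R 0 \<in> D"
        using convexD[OF vD tD D0, of "\<delta>/t" "1 - \<delta>/t"] t0 that \<delta> by simp
      have eq: "(\<delta>/t) *\<^sub>R (t *\<^sub>R e) + (1 - \<delta>/t) *\<^sub>R 0 = \<delta> *\<^sub>R e" using t0 by simp
      have "\<delta> *\<^sub>R e \<in> D" using mem unfolding eq .
      then show False using \<delta>D by contradiction
    qed
    define N where "N = nat \<lfloor>s/\<delta>\<rfloor> + 1"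
    define Y where "Y j = (\<lambda>x. (real j * \<delta>) *\<^sub>R e + x) ` X" for j :: nat
    have Ydisj: "Y j \<inter> Y k = {}" if "j < k" for j k
    proof (rule ccontr)
      assume "Y j \<inter> Y k \<noteq> {}"
      then obtain x y where xy: "x\<in>X" "y\<in>X" "(real j * \<delta>) *\<^sub>R e + x = (real k * \<delta>) *\<^sub>R e + y"
        unfolding Y_def by blast
      then have "x - y = (real k * \<delta> - real j * \<delta>) *\<^sub>R e"
        by (simp add: algebra_simps)
      moreover have "x - y \<in> D" using xy(1,2) unfolding D_def by blast
      ultimately have "(real k * \<delta> - real j * \<delta>) *\<^sub>R e \<in> D" by simp
      moreover have "real k * \<delta> - real j * \<delta> \<ge> \<delta>"
      proof -
        have "j + 1 \<le> k" using that by simp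
        then have "real j + 1 \<le> real k" by (metis of_nat_1 of_nat_add of_nat_le_iff)
        then have "(real k - real j) * \<delta> \<ge> 1 * \<delta>" using \<delta> by (intro mult_right_mono) auto
        then show ?thesis by (simp add: algebra_simps)
      qed
      ultimately show False using farD by blast
    qed
    define S where "S = Y ` {..<N}"
    have Yne: "Y j \<noteq> {}" for j using X(4) unfolding Y_def by auto
    have inj: "inj_on Y {..<N}"
    proof (rule inj_onI)
      fix j k assume "j \<in> {..<N}" "k\<in>{..<N}" "Y j = Y k"
      show "j = k"
      proof (rule ccontr)
        assume "j \<noteq> k"
        then have "j < k \<or> k < j" by arith
        then show False using Ydisj[of j k] Ydisj[of k j] \<open>Y j = Y k\<close> Yne[of j]
          by auto
      qed
    qed
    have cardS: "card S = N" unfolding S_def using card_image[OF inj] by simp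
    have h1: "S \<subseteq> \<X>" unfolding S_def Y_def using tr X(1) by auto
    have h2: "pairwise disjnt S"
    proof (rule pairwiseI)
      fix A B assume "A \<in> S" "B \<in> S" "A \<noteq> B"
      then obtain j k where "A = Y j" "B = Y k" "j \<noteq> k" unfolding S_def by auto
      moreover have "j < k \<or> k < j" using \<open>j \<noteq> k\<close> by arith
      ultimately show "disjnt A B" using Ydisj[of j k] Ydisj[of k j] unfolding disjnt_def
        by (auto simp: Int_commute)
    qed
    have h3: "\<forall>A\<in>S. obj_size A \<ge> s \<and> A \<inter> cube p s \<noteq> {}"
    proof
      fix A assume "A \<in> S"
      then obtain j where j: "j < N" "A = Y j" unfolding S_def by auto
      have "s \<le> obj_size A" using sz j unfolding Y_def by simp
      moreover have "(real j * \<delta>) *\<^sub>R e + p \<in> A" using j X(4) unfolding Y_def by auto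
      moreover have "(real j * \<delta>) *\<^sub>R e + p \<in> cube p s"
      proof -
        have fl: "0 \<le> \<lfloor>s/\<delta>\<rfloor>" using s0 \<delta> by simp
        have "j \<le> nat \<lfloor>s/\<delta>\<rfloor>" using j(1) unfolding N_def by simp
        then have "int j \<le> \<lfloor>s/\<delta>\<rfloor>" using fl le_nat_iff by blast
        then have "real j \<le> s/\<delta>" by (metis le_floor_iff of_int_of_nat_eq)
        then have jd: "real j * \<delta> \<le> s" using \<delta> by (simp add: pos_le_divide_eq)
        have "0 \<le> real j * \<delta>" using \<delta> by simp
        then show ?thesis unfolding mem_cube e_def using jd by (simp add: axis_def)
      qed
      ultimately show "obj_size A \<ge> s \<and> A \<inter> cube p s \<noteq> {}" by blast
    qed
    have "S \<subseteq> \<X> \<and> pairwise disjnt S \<and> (\<forall>A\<in>S. obj_size A \<ge> s \<and> A \<inter> cube p s \<noteq> {})"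
      using h1 h2 h3 by simp
    from fat[unfolded c_fat_def, rule_format, OF this] have "real (card S) \<le> c" by simp
    then have "real N \<le> c" using cardS by simp
    moreover have "real N > s/\<delta>"
    proof -
      have fl: "0 \<le> \<lfloor>s/\<delta>\<rfloor>" using s0 \<delta> by simp
      have "real N = of_int \<lfloor>s/\<delta>\<rfloor> + 1" unfolding N_def using fl by simp
      then show ?thesis by linarith
    qed
    moreover have "s/\<delta> > s/l" using \<delta> s0 by (simp add: divide_strict_left_mono)
    moreover have "s/l = c" using s0 c by (simp add: l_def)
    ultimately show False by linarith
  qed
qed


theorem lemma3p8:
  fixes \<X> :: "(real ^ 'n) set set" and c :: real
  assumes "CARD('n) \<ge> 2"
    and "c \<ge> 1"
    and "\<forall>X\<in>\<X>. is_object X \<and> convex X"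
    and "c_fat c \<X>"
    and "\<forall>X\<in>\<X>. \<forall>f. rotation f \<longrightarrow> f ` X \<in> \<X>"
    and "\<forall>X\<in>\<X>. \<forall>v. (\<lambda>x. v + x) ` X \<in> \<X>"
  shows "globally_fat (c * real CARD('n) * sqrt (real CARD('n))) \<X>"
  unfolding globally_fat_def
proof
  fix X assume XX: "X \<in> \<X>"
  have Xo: "X \<noteq> {}" "compact X" "convex X" using assms(3) XX unfolding is_object_def by auto
  have cimg: "compact ((\<lambda>x. x$i) ` X)" for i
    by (rule compact_continuous_image) (auto intro!: continuous_intros simp: Xo)
  have "\<forall>i. \<exists>y. y \<in> X \<and> (\<forall>x\<in>X. y$i \<le> x$i)"
  proof
    fix i
    obtain m where "m \<in> (\<lambda>x. x$i) ` X" "\<forall>t \<in> (\<lambda>x. x$i) ` X. m \<le> t"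
      using compact_attains_inf[OF cimg[of i]] Xo(1) by blast
    then show "\<exists>y. y \<in> X \<and> (\<forall>x\<in>X. y$i \<le> x$i)" by auto
  qed
  then obtain lo where lo: "\<And>i. lo i \<in> X" "\<And>i x. x \<in> X \<Longrightarrow> lo i $ i \<le> x$i" by metis
  have "\<forall>i. \<exists>y. y \<in> X \<and> (\<forall>x\<in>X. x$i \<le> y$i)"
  proof
    fix i
    obtain m where "m \<in> (\<lambda>x. x$i) ` X" "\<forall>t \<in> (\<lambda>x. x$i) ` X. t \<le> m"
      using compact_attains_sup[OF cimg[of i]] Xo(1) by blast
    then show "\<exists>y. y \<in> X \<and> (\<forall>x\<in>X. x$i \<le> y$i)" by auto
  qed
  then obtain hi where hi: "\<And>i. hi i \<in> X" "\<And>i x. x \<in> X \<Longrightarrow> x$i \<le> hi i $ i" by metis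
  define w where "w i = hi i $ i - lo i $ i" for i
  define s where "s = Max (range w)"
  have "s \<in> range w" unfolding s_def by (rule Max_in) auto
  then obtain i0 where i0: "s = w i0" by auto
  have ws: "w i \<le> s" for i unfolding s_def by (rule Max_ge) auto
  have s0: "s \<ge> 0" using i0 lo(2)[OF hi(1)[of i0], of i0] unfolding w_def by simp
  define a where "a = (\<chi> i. lo i $ i)"
  have Xc: "X \<subseteq> cube a s"
  proof
    fix x assume x: "x \<in> X"
    show "x \<in> cube a s" unfolding mem_cube
    proof
      fix i
      have "lo i $ i \<le> x $ i" "x$i \<le> hi i $ i" using lo(2)[OF x] hi(2)[OF x] by auto
      then show "a $ i \<le> x $ i \<and> x $ i \<le> a $ i + s" using ws[of i] unfolding a_def w_def by simp
    qed
  qed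
  have sz: "\<forall>v. s \<le> obj_size ((\<lambda>x. v + x) ` X)"
  proof
    fix v
    have "bounded ((\<lambda>x. v + x) ` X)" using bounded_translation compact_imp_bounded Xo(2) by blast
    from obj_size_ge[OF this, of "v + hi i0" "v + lo i0" i0]
    show "s \<le> obj_size ((\<lambda>x. v + x) ` X)" using hi(1) lo(1) i0 unfolding w_def by auto
  qed
  have c0: "c > 0" using assms(2) by simp
  obtain p where p: "p \<in> X" using Xo(1) by blast
  have "\<forall>i. \<exists>x. x \<in> X \<and> x + (s/c) *\<^sub>R axis i 1 \<in> X"
    using chord[OF XX Xo(2) Xo(3) p assms(4) assms(6) c0 s0 sz] by blast
  then obtain P where P: "\<And>i. P i \<in> X" "\<And>i. P i + (s/c) *\<^sub>R axis i 1 \<in> X" by metis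
  define l where "l = s/c"
  have l0: "l \<ge> 0" using s0 c0 by (simp add: l_def)
  define dd where "dd = real CARD('n)"
  have dd0: "dd > 0" unfolding dd_def by simp
  define q where "q = (1/dd) *\<^sub>R (\<Sum>i\<in>UNIV. P i)"
  define Rin where "Rin = l / (2*dd)"
  define z where "z = q + Rin *\<^sub>R One"
  have inner: "cball z Rin \<subseteq> X"
  proof
    fix y assume "y \<in> cball z Rin"
    then have "norm (y - z) \<le> Rin" by (simp add: dist_norm norm_minus_commute)
    then have yi: "\<bar>y$i - z$i\<bar> \<le> Rin" for i using component_le_norm_cart[of "y - z" i] by simp
    define W where "W i = P i + (dd * (y$i - q$i)) *\<^sub>R axis i 1" for i
    have WX: "W i \<in> X" for i
    proof -
      have zi: "z$i = q$i + Rin" unfolding z_def by simp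
      have "0 \<le> y$i - q$i" "y$i - q$i \<le> 2 * Rin" using yi[of i] zi by (auto simp: abs_le_iff)
      then have "0 \<le> dd * (y$i - q$i)" "dd * (y$i - q$i) \<le> l"
        using dd0 by (auto simp: Rin_def field_simps)
      then show ?thesis unfolding W_def using seg_in[OF Xo(3) P(1) P(2)[of i, folded l_def]] by blast
    qed
    have yW: "y = (\<Sum>i\<in>UNIV. (1/dd) *\<^sub>R W i)"
    proof (subst vec_eq_iff, rule allI)
      fix j
      have "(\<Sum>i\<in>UNIV. (1/dd) *\<^sub>R W i) $ j
          = (\<Sum>i\<in>UNIV. (1/dd) * P i $ j) + (\<Sum>i\<in>UNIV. (if i = j then y$i - q$i else 0))"
      proof -
        have t: "(1/dd) * (W i $ j) = (1/dd) * P i $ j + (if i = j then y$i - q$i else 0)" for i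
          unfolding W_def using dd0 by (simp add: axis_def field_simps)
        have "(\<Sum>i\<in>UNIV. (1/dd) *\<^sub>R W i) $ j = (\<Sum>i\<in>UNIV. (1/dd) * (W i $ j))" by simp
        also have "\<dots> = (\<Sum>i\<in>UNIV. (1/dd) * P i $ j + (if i = j then y$i - q$i else 0))"
          using t by simp
        finally show ?thesis by (simp add: sum.distrib)
      qed
      also have "\<dots> = q$j + (y$j - q$j)"
      proof -
        have "(\<Sum>i\<in>UNIV. (if i = j then y$i - q$i else 0)) = y$j - q$j"
          by (simp add: sum.delta)
        moreover have "(\<Sum>i\<in>UNIV. (1/dd) * P i $ j) = q$j" unfolding q_def by (simp add: sum_distrib_left)
        ultimately show ?thesis by simp
      qed
      finally show "y $ j = (\<Sum>i\<in>UNIV. (1/dd) *\<^sub>R W i) $ j" by simp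
    qed
    have "(\<Sum>i\<in>UNIV. (1/dd) *\<^sub>R W i) \<in> X"
      by (rule convex_sum[OF finite Xo(3)]) (use dd0 WX in \<open>auto simp: dd_def\<close>)
    then show "y \<in> X" using yW by simp
  qed
  define m where "m = a + (s/2) *\<^sub>R One"
  define Rout where "Rout = sqrt dd * (s/2)"
  have outer: "X \<subseteq> cball m Rout"
  proof
    fix x assume "x \<in> X"
    then have "x \<in> cube a s" using Xc by blast
    then have xi: "dist (m$i) (x$i) \<le> s/2" for i
    proof -
      have "a$i \<le> x$i" "x$i \<le> a$i + s" using \<open>x \<in> cube a s\<close> unfolding mem_cube by auto
      moreover have "m$i = a$i + s/2" unfolding m_def by simp
      ultimately show ?thesis unfolding dist_real_def by (simp only:)
    qed
    have "dist m x = L2_set (\<lambda>i. dist (m$i) (x$i)) UNIV" by (simp add: dist_vec_def)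
    also have "\<dots> \<le> L2_set (\<lambda>i. s/2) (UNIV::'n set)" by (rule L2_set_mono) (use xi in auto)
    also have "\<dots> = Rout" unfolding Rout_def dd_def using s0 by (simp add: L2_set_constant)
    finally show "x \<in> cball m Rout" by simp
  qed
  show "globally_fat_obj (c * real CARD('n) * sqrt (real CARD('n))) X"
    unfolding globally_fat_obj_def
  proof (intro exI conjI)
    show "0 \<le> Rin" unfolding Rin_def using l0 dd0 by simp
    show "cball z Rin \<subseteq> X" by (rule inner)
    show "X \<subseteq> cball m Rout" by (rule outer)
    show "Rout \<le> c * real CARD('n) * sqrt (real CARD('n)) * Rin"
      unfolding Rout_def Rin_def l_def dd_def[symmetric] using c0 dd0 by (simp add: field_simps)
  qed
qed

end
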